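(* Let $K\in{\rm Alg}(V)$ be a cyclic Galois field extension of $F$ of degree $n$ with ${\rm Gal}(K/F)=\langle\tau\rangle$. All $g,g'$ below are in ${\rm Gl}(V)$. (1) Let $y_1,z_1\in M$ and $y_i,z_i\in K^\times$ for $2\le i\le n-1$, with $N_{A_0/F}(1+y_1t+\cdots+y_{n-1}t^{n-1})\ne0$ and $N_{A_0/F}(1+z_1t+\cdots+z_{n-1}t^{n-1})\ne0$. Then $$K^{({\rm id}+\sum_{i=1}^{n-1}L(y_i)\tau^i,\,g)}\cong K^{({\rm id}+\sum_{i=1}^{n-1}L(z_i)\tau^i,\,g')}$$ iff $z_1=y_1$ and there exist $v\in K^\times$, $\sigma\in{\rm Gal}(K/F)$ with $y_1=\tau(v)v^{-1}\sigma(y_1)$, $z_i=\tau^i(v)v^{-1}\sigma(y_i)$ for all $i$, and $g'=\sigma g\sigma^{-1}L(v)$. For $\sigma={\rm id}$ this means: $z_i=y_i$ for all $i$ and $g'=ag$ for some $a\in F^\times$; for $\sigma=\tau$ it means: $z_i=\tau^i(y_1^{-1})y_1\tau(y_i)$ for all $i$ and $g'=a\,\tau g\tau^{-1}L(y_1^{-1})$ for some $a\in F^\times$. (2) Let $x_i,w_i\in K$ with $N_{A_0/F}(x_1t+\cdots+x_{n-1}t^{n-1})\ne0\ne N_{A_0/F}(w_1t+\cdots+w_{n-1}t^{n-1})$. Then $K^{({\rm id},\sum_{i=1}^{n-1}L(x_i)\tau^i)}\cong K^{({\rm id},\sum_{i=1}^{n-1}L(w_i)\tau^i)}$ iff there exist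 $v\in K^\times$, $\sigma\in{\rm Gal}(K/F)$ with $w_i=\sigma(x_i)\tau^i(v)$ for all $1\le i\le n-1$. (3) Let $x_i,w_i\in K$ with $N_{A_0/F}(1+x_1t+\cdots+x_{n-1}t^{n-1})\ne0\ne N_{A_0/F}(1+w_1t+\cdots+w_{n-1}t^{n-1})$. Then $K^{({\rm id},{\rm id}+\sum_{i=1}^{n-1}L(x_i)\tau^i)}\cong K^{({\rm id},{\rm id}+\sum_{i=1}^{n-1}L(w_i)\tau^i)}$ iff there exists $\sigma\in{\rm Gal}(K/F)$ with $w_i=\sigma(x_i)$ for all $1\le i\le n-1$.
   Context: $F$ is a field, $V$ an $n$-dimensional $F$-vector space, $K\in{\rm Alg}(V)$ an $F$-algebra structure on $V$ which is a field. $N=N_{K/F}$ is the field norm. $L(x)$ is the map $y\mapsto xy$. For $f,g\in{\rm End}_F(V)$, $K^{(f,g)}$ is $V$ with product $x\cdot y=f(x)g(y)$. $S(K)=\{x\in K:N(x)=1\}$ and $M\subseteq K^\times$ is a fixed set of representatives of $K^\times/S(K)$ containing $1$. $A_0=(K/F,\tau,1)$ is the cyclic algebra, the free left $K$-module with basis $1,t,\dots,t^{n-1}$ and multiplication $tx=\tau(x)t$, $t^n=1$, with reduced norm $N_{A_0/F}$; $N_{A_0/F}(\sum y_it^i)\ne0$ iff $\sum L(y_i)\tau^i$ is invertible. *)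

theory Defs
  imports Main
begin

text \<open>The field K is modelled as the whole type 'a; the base field F is a subfield
  F of 'a; V is K regarded as an F-vector space.\<close>

definition subfield :: "'a::field set \<Rightarrow> bool" where
  "subfield F \<longleftrightarrow> 0 \<in> F \<and> 1 \<in> F \<and>
     (\<forall>a\<in>F. \<forall>b\<in>F. a + b \<in> F \<and> a - b \<in> F \<and> a * b \<in> F) \<and>
     (\<forall>a\<in>F. inverse a \<in> F)"

definition ext_degree :: "'a::field set \<Rightarrow> nat \<Rightarrow> bool" where
  "ext_degree F n \<longleftrightarrow> (\<exists>b :: nat \<Rightarrow> 'a.
     bij_betw (\<lambda>c. \<Sum>i<n. c i * b i) {c. (\<forall>i<n. c i \<in> F) \<and> (\<forall>i\<ge>n. c i = 0)} UNIV)"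

definition F_linear :: "'a::field set \<Rightarrow> ('a \<Rightarrow> 'a) \<Rightarrow> bool" where
  "F_linear F f \<longleftrightarrow> (\<forall>x y. f (x + y) = f x + f y) \<and> (\<forall>a\<in>F. \<forall>x. f (a * x) = a * f x)"

definition GL :: "'a::field set \<Rightarrow> ('a \<Rightarrow> 'a) set" where
  "GL F = {f. F_linear F f \<and> bij f}"

definition Gal :: "'a::field set \<Rightarrow> ('a \<Rightarrow> 'a) set" where
  "Gal F = {\<sigma>. bij \<sigma> \<and> (\<forall>x y. \<sigma> (x + y) = \<sigma> x + \<sigma> y) \<and> (\<forall>x y. \<sigma> (x * y) = \<sigma> x * \<sigma> y)
               \<and> \<sigma> 1 = 1 \<and> (\<forall>a\<in>F. \<sigma> a = a)}"

definition cyclic_galois :: "'a::field set \<Rightarrow> nat \<Rightarrow> ('a \<Rightarrow> 'a) \<Rightarrow> bool" where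
  "cyclic_galois F n \<tau> \<longleftrightarrow> subfield F \<and> ext_degree F n \<and> \<tau> \<in> Gal F \<and>
     Gal F = {\<tau> ^^ i | i. i < n} \<and> card (Gal F) = n"

definition field_norm :: "'a::field set \<Rightarrow> 'a \<Rightarrow> 'a" where
  "field_norm F x = (\<Prod>\<sigma>\<in>Gal F. \<sigma> x)"

definition S_norm1 :: "'a::field set \<Rightarrow> 'a set" where
  "S_norm1 F = {x. field_norm F x = 1}"

definition norm_reps :: "'a::field set \<Rightarrow> 'a set \<Rightarrow> bool" where
  "norm_reps F M \<longleftrightarrow> M \<subseteq> - {0} \<and> 1 \<in> M \<and>
     (\<forall>x. x \<noteq> 0 \<longrightarrow> (\<exists>!m. m \<in> M \<and> (\<exists>s\<in>S_norm1 F. x = m * s)))"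

text \<open>The F-linear map sum_(i<n) L(c_i) tau^i attached to sum_(i<n) c_i t^i in A_0.\<close>
definition cyc_map :: "nat \<Rightarrow> ('a::field \<Rightarrow> 'a) \<Rightarrow> (nat \<Rightarrow> 'a) \<Rightarrow> 'a \<Rightarrow> 'a" where
  "cyc_map n \<tau> c = (\<lambda>u. \<Sum>i<n. c i * (\<tau> ^^ i) u)"

text \<open>N_(A_0/F)(sum_(i<n) c_i t^i) \<noteq> 0; A_0 = (K/F,tau,1) is split,
  A_0 \<cong> End_F(K) via x t^i \<mapsto> L(x) tau^i, so the reduced norm is the determinant of
  cyc_map, which is nonzero iff cyc_map is invertible.\<close>
definition A0_norm_nonzero :: "nat \<Rightarrow> ('a::field \<Rightarrow> 'a) \<Rightarrow> (nat \<Rightarrow> 'a) \<Rightarrow> bool" where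
  "A0_norm_nonzero n \<tau> c \<longleftrightarrow> bij (cyc_map n \<tau> c)"

definition twisted_iso ::
  "'a::field set \<Rightarrow> ('a \<Rightarrow> 'a) \<Rightarrow> ('a \<Rightarrow> 'a) \<Rightarrow> ('a \<Rightarrow> 'a) \<Rightarrow> ('a \<Rightarrow> 'a) \<Rightarrow> bool" where
  "twisted_iso F f g f' g' \<longleftrightarrow> (\<exists>\<phi>. F_linear F \<phi> \<and> bij \<phi> \<and>
     (\<forall>x y. \<phi> (f x * g y) = f' (\<phi> x) * g' (\<phi> y)))"

definition cond1 :: "nat \<Rightarrow> ('a::field \<Rightarrow> 'a) \<Rightarrow> (nat \<Rightarrow> 'a) \<Rightarrow> (nat \<Rightarrow> 'a)
     \<Rightarrow> ('a \<Rightarrow> 'a) \<Rightarrow> ('a \<Rightarrow> 'a) \<Rightarrow> ('a \<Rightarrow> 'a) \<Rightarrow> bool" where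
  "cond1 n \<tau> y z g g' \<sigma> \<longleftrightarrow> (\<exists>v. v \<noteq> 0 \<and>
      y 1 = \<tau> v * inverse v * \<sigma> (y 1) \<and>
      (\<forall>i\<in>{1..n-1}. z i = (\<tau> ^^ i) v * inverse v * \<sigma> (y i)) \<and>
      g' = (\<lambda>u. \<sigma> (g (inv \<sigma> (v * u)))))"

end

theory Submission
  imports Defs "Jordan_Normal_Form.Determinant"
begin

unbundle no m_inv_syntax

lemma gal_props:
  assumes "\<sigma> \<in> Gal F"
  shows "bij \<sigma>" "\<sigma> (x + y) = \<sigma> x + \<sigma> y" "\<sigma> (x * y) = \<sigma> x * \<sigma> y" "\<sigma> 1 = 1"
    "a \<in> F \<Longrightarrow> \<sigma> a = a"
  using assms by (auto simp: Gal_def)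

lemma gal_zero: assumes "\<sigma> \<in> Gal F" shows "\<sigma> 0 = 0"
proof -
  have "\<sigma> (0 + 0) = \<sigma> 0 + \<sigma> 0" using gal_props(2)[OF assms] .
  then show ?thesis by (metis add_0 add_cancel_right_right)
qed

lemma gal_eq0: assumes "\<sigma> \<in> Gal F" shows "\<sigma> x = 0 \<longleftrightarrow> x = 0"
  using gal_zero[OF assms] gal_props(1)[OF assms] by (metis bij_pointE)

lemma gal_inverse: assumes "\<sigma> \<in> Gal F" shows "\<sigma> (inverse x) = inverse (\<sigma> x)"
proof (cases "x = 0")
  case True then show ?thesis using gal_zero[OF assms] by simp
next
  case False
  have "\<sigma> (inverse x) * \<sigma> x = 1" using gal_props(3)[OF assms, of "inverse x" x] gal_props(4)[OF assms] False by simp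
  moreover have "\<sigma> x \<noteq> 0" using False gal_eq0[OF assms] by simp
  ultimately show ?thesis by (simp add: field_simps)
qed

lemma gal_sum: assumes "\<sigma> \<in> Gal F" shows "\<sigma> (sum f A) = (\<Sum>i\<in>A. \<sigma> (f i))"
proof (induction A rule: infinite_finite_induct)
  case (infinite A) then show ?case using gal_zero[OF assms] by simp
next
  case empty then show ?case using gal_zero[OF assms] by simp
next
  case (insert x A) then show ?case using gal_props(2)[OF assms] by simp
qed

lemma gal_comp: assumes "\<sigma> \<in> Gal F" "\<rho> \<in> Gal F" shows "\<sigma> \<circ> \<rho> \<in> Gal F"
  using assms unfolding Gal_def by (auto intro: bij_comp)

lemma id_gal: "id \<in> Gal F" by (auto simp: Gal_def)

lemma gal_pow: assumes "\<tau> \<in> Gal F" shows "\<tau> ^^ i \<in> Gal F"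
proof (induction i)
  case 0 then show ?case by (simp only: funpow.simps(1) id_gal)
next
  case (Suc i) then show ?case using gal_comp[OF assms Suc] by (simp only: funpow.simps)
qed

lemma dedekind:
  fixes f :: "'i \<Rightarrow> 'a::field \<Rightarrow> 'a"
  assumes "finite I" "inj_on f I" "\<And>i. i \<in> I \<Longrightarrow> f i \<in> Gal F"
  shows "(\<forall>u. (\<Sum>i\<in>I. c i * f i u) = 0) \<Longrightarrow> \<forall>i\<in>I. c i = 0"
  using assms
proof (induction I arbitrary: c rule: finite_induct)
  case empty then show ?case by simp
next
  case (insert j I)
  have gj: "f j \<in> Gal F" using insert by simp
  have S: "\<forall>i\<in>I. c i * (f i h - f j h) = 0" for h
  proof -
    have "(\<Sum>i\<in>I. (c i * (f i h - f j h)) * f i u) = 0" for u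
    proof -
      have e1: "(\<Sum>i\<in>insert j I. c i * f i (h * u)) = 0" using insert.prems(1) by blast
      have e2: "(\<Sum>i\<in>insert j I. c i * f i u) = 0" using insert.prems(1) by blast
      have "(\<Sum>i\<in>insert j I. c i * f i (h * u)) = (\<Sum>i\<in>insert j I. c i * f i h * f i u)"
        by (rule sum.cong) (use gal_props(3)[OF insert.prems(3)] in auto)
      also have "\<dots> = c j * f j h * f j u + (\<Sum>i\<in>I. c i * f i h * f i u)"
        using insert.hyps by simp
      finally have a: "c j * f j h * f j u + (\<Sum>i\<in>I. c i * f i h * f i u) = 0" using e1 by simp
      have b: "f j h * (c j * f j u + (\<Sum>i\<in>I. c i * f i u)) = 0" using e2 insert.hyps by simp
      have "(\<Sum>i\<in>I. (c i * (f i h - f j h)) * f i u) =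
            (\<Sum>i\<in>I. c i * f i h * f i u) - f j h * (\<Sum>i\<in>I. c i * f i u)"
        by (simp add: sum_subtractf sum_distrib_left algebra_simps)
      also have "\<dots> = 0"
      proof -
        have "(\<Sum>i\<in>I. c i * f i h * f i u) = f j h * (\<Sum>i\<in>I. c i * f i u)"
        proof -
          have b': "c j * f j h * f j u + f j h * (\<Sum>i\<in>I. c i * f i u) = 0"
            using b by (simp add: distrib_left mult.assoc mult.left_commute)
          have "c j * f j h * f j u + (\<Sum>i\<in>I. c i * f i h * f i u)
              = c j * f j h * f j u + f j h * (\<Sum>i\<in>I. c i * f i u)" using a b' by simp
          then show ?thesis by (rule add_left_imp_eq)
        qed
        then show ?thesis by simp
      qed
      finally show ?thesis .
    qed
    then show ?thesis using insert.IH[of "\<lambda>i. c i * (f i h - f j h)"] insert.prems by auto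
  qed
  have cI: "\<forall>i\<in>I. c i = 0"
  proof
    fix i assume i: "i \<in> I"
    then have "f i \<noteq> f j" using insert.prems(2) insert.hyps by (auto simp: inj_on_def)
    then obtain h where "f i h \<noteq> f j h" by auto
    then show "c i = 0" using S[of h] i by auto
  qed
  have "(\<Sum>i\<in>insert j I. c i * f i 1) = 0" using insert.prems(1) by blast
  then have "c j * f j 1 = 0" using cI insert.hyps by simp
  then have "c j = 0" using gal_props(4)[OF gj] by simp
  then show ?case using cI by simp
qed


locale cg =
  fixes F :: "'a::field set" and n :: nat and \<tau> :: "'a \<Rightarrow> 'a"
  assumes cyc: "cyclic_galois F n \<tau>" and n1: "1 \<le> n"
begin

lemma sub: "subfield F" and tauG: "\<tau> \<in> Gal F" and G_eq: "Gal F = {\<tau> ^^ i | i. i < n}"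
  and cardG: "card (Gal F) = n" and extd: "ext_degree F n"
  using cyc by (auto simp: cyclic_galois_def)

lemma finG: "finite (Gal F)" by (rule card_ge_0_finite) (use cardG n1 in simp)

lemma powG: "\<tau> ^^ i \<in> Gal F" using gal_pow[OF tauG] .

lemma inj_pow: "inj_on (\<lambda>i. \<tau> ^^ i) {..<n}"
proof -
  have "Gal F = (\<lambda>i. \<tau> ^^ i) ` {..<n}" using G_eq by auto
  then have "card ((\<lambda>i. \<tau> ^^ i) ` {..<n}) = card {..<n}" using cardG by simp
  then show ?thesis by (simp add: eq_card_imp_inj_on)
qed

lemma gal_form: "\<sigma> \<in> Gal F \<Longrightarrow> \<exists>k. \<sigma> = \<tau> ^^ k" using G_eq by auto

lemma gal_commute: assumes "\<sigma> \<in> Gal F" shows "\<sigma> ((\<tau> ^^ i) u) = (\<tau> ^^ i) (\<sigma> u)"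
proof -
  obtain k where k: "\<sigma> = \<tau> ^^ k" using gal_form[OF assms] by blast
  have "(\<tau> ^^ k) ((\<tau> ^^ i) u) = (\<tau> ^^ (k + i)) u" by (simp add: funpow_add)
  also have "\<dots> = (\<tau> ^^ i) ((\<tau> ^^ k) u)" by (simp add: funpow_add add.commute)
  finally show ?thesis using k by simp
qed

lemma ded: "(\<forall>u. (\<Sum>i<n. c i * (\<tau> ^^ i) u) = 0) \<Longrightarrow> \<forall>i<n. c i = 0"
  using dedekind[of "{..<n}" "\<lambda>i. \<tau> ^^ i" F c] inj_pow powG by auto

lemma pow_fixF: "a \<in> F \<Longrightarrow> (\<tau> ^^ i) a = a" using gal_props(5)[OF powG] .

lemma fix_pow: "\<tau> v = v \<Longrightarrow> (\<tau> ^^ i) v = v" by (induction i) auto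

lemma subF: "a \<in> F \<Longrightarrow> b \<in> F \<Longrightarrow> a * b \<in> F" "a \<in> F \<Longrightarrow> inverse a \<in> F"
  using sub by (auto simp: subfield_def)

lemma artin: assumes fx: "\<tau> v = v" shows "v \<in> F"
proof -
  obtain b :: "nat \<Rightarrow> 'a" where bb: "bij_betw (\<lambda>c. \<Sum>i<n. c i * b i)
     {c. (\<forall>i<n. c i \<in> F) \<and> (\<forall>i\<ge>n. c i = 0)} UNIV"
    using extd unfolding ext_degree_def by blast
  have surj: "\<exists>c. (\<forall>i<n. c i \<in> F) \<and> u = (\<Sum>i<n. c i * b i)" for u
  proof -
    have "u \<in> (\<lambda>c. \<Sum>i<n. c i * b i) ` {c. (\<forall>i<n. c i \<in> F) \<and> (\<forall>i\<ge>n. c i = 0)}"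
      using bij_betw_imp_surj_on[OF bb] by simp
    then show ?thesis by blast
  qed
  have coord: "(\<tau> ^^ j) (\<Sum>k<n. c k * b k) = (\<Sum>k<n. c k * (\<tau> ^^ j) (b k))"
    if "\<forall>i<n. c i \<in> F" for c j
    using that by (simp add: gal_sum[OF powG] gal_props(3)[OF powG] pow_fixF)
  have rowind: "\<forall>j<n. c j = 0" if h: "\<forall>k<n. (\<Sum>j<n. c j * (\<tau> ^^ j) (b k)) = 0" for c
  proof (rule ded, rule allI)
    fix u
    obtain f where f: "\<forall>i<n. f i \<in> F" "u = (\<Sum>k<n. f k * b k)" using surj by blast
    have "(\<Sum>i<n. c i * (\<tau> ^^ i) u) = (\<Sum>i<n. c i * (\<Sum>k<n. f k * (\<tau> ^^ i) (b k)))"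
      using coord[OF f(1)] f(2) by simp
    also have "\<dots> = (\<Sum>i<n. \<Sum>k<n. f k * (c i * (\<tau> ^^ i) (b k)))"
      by (simp add: sum_distrib_left mult.left_commute)
    also have "\<dots> = (\<Sum>k<n. \<Sum>i<n. f k * (c i * (\<tau> ^^ i) (b k)))"
      by (rule sum.swap)
    also have "\<dots> = (\<Sum>k<n. f k * (\<Sum>i<n. c i * (\<tau> ^^ i) (b k)))"
      by (simp add: sum_distrib_left)
    also have "\<dots> = 0" using h by simp
    finally show "(\<Sum>i<n. c i * (\<tau> ^^ i) u) = 0" .
  qed
  define A where "A = mat n n (\<lambda>(j,k). (\<tau> ^^ j) (b k))"
  have Ac: "A \<in> carrier_mat n n" unfolding A_def by simp
  have "det (transpose_mat A) \<noteq> 0"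
  proof
    assume "det (transpose_mat A) = 0"
    then obtain c where c: "c \<in> carrier_vec n" "c \<noteq> 0\<^sub>v n" "transpose_mat A *\<^sub>v c = 0\<^sub>v n"
      using det_0_iff_vec_prod_zero_field[of "transpose_mat A" n] Ac by auto
    have "\<forall>k<n. (\<Sum>j<n. c $ j * (\<tau> ^^ j) (b k)) = 0"
    proof (intro allI impI)
      fix k assume k: "k < n"
      have "(transpose_mat A *\<^sub>v c) $ k = 0" using c(3) k by simp
      then show "(\<Sum>j<n. c $ j * (\<tau> ^^ j) (b k)) = 0"
        using k c(1) unfolding A_def
        by (simp add: scalar_prod_def atLeast0LessThan mult.commute)
    qed
    from rowind[OF this] have "c = 0\<^sub>v n" using c(1) by (intro eq_vecI) auto
    then show False using c(2) by simp
  qed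
  then have dA: "det A \<noteq> 0" using det_transpose[OF Ac] by simp
  have colind: "\<forall>k<n. d k = 0" if h: "\<forall>j<n. (\<Sum>k<n. (\<tau> ^^ j) (b k) * d k) = 0" for d
  proof -
    have "A *\<^sub>v vec n d = 0\<^sub>v n"
      using h unfolding A_def by (intro eq_vecI) (auto simp: scalar_prod_def atLeast0LessThan)
    then have "vec n d = 0\<^sub>v n" using det_0_iff_vec_prod_zero_field[OF Ac] dA vec_carrier by blast
    then show ?thesis by (metis index_vec index_zero_vec(1))
  qed
  obtain f where f: "\<forall>i<n. f i \<in> F" "v = (\<Sum>k<n. f k * b k)" using surj by blast
  obtain e where e: "\<forall>i<n. e i \<in> F" "1 = (\<Sum>k<n. e k * b k)" using surj by blast
  have "\<forall>k<n. f k - v * e k = 0"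
  proof (rule colind, intro allI impI)
    fix j assume j: "j < n"
    have "(\<Sum>k<n. (\<tau> ^^ j) (b k) * (f k - v * e k)) =
        (\<Sum>k<n. f k * (\<tau> ^^ j) (b k)) - v * (\<Sum>k<n. e k * (\<tau> ^^ j) (b k))"
      by (simp add: algebra_simps sum_subtractf sum_distrib_left)
    also have "\<dots> = (\<tau> ^^ j) v - v * (\<tau> ^^ j) 1"
      using coord[OF f(1)] coord[OF e(1)] f(2) e(2) by simp
    also have "\<dots> = 0" using fix_pow[OF fx] gal_props(4)[OF powG] by simp
    finally show "(\<Sum>k<n. (\<tau> ^^ j) (b k) * (f k - v * e k)) = 0" .
  qed
  moreover obtain k where k: "k < n" "e k \<noteq> 0"
  proof -
    have "\<not> (\<forall>k<n. e k = 0)"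
    proof
      assume "\<forall>k<n. e k = 0"
      then have "(\<Sum>k<n. e k * b k) = 0" by simp
      then show False using e(2) by simp
    qed
    then show ?thesis using that by blast
  qed
  ultimately have "v = f k * inverse (e k)" by (simp add: field_simps)
  then show ?thesis using subF f(1) e(1) k(1) by simp
qed

end



lemma bij_scale: assumes "(c::'a::field) \<noteq> 0" shows "bij (\<lambda>u. c * u)"
  by (rule o_bij[where g="\<lambda>u. inverse c * u"]) (use assms in \<open>auto simp: fun_eq_iff\<close>)

lemma bij_csig: assumes "(c::'a::field) \<noteq> 0" "bij \<sigma>" shows "bij (\<lambda>u. c * \<sigma> u)"
proof -
  have "(\<lambda>u. c * \<sigma> u) = (\<lambda>u. c * u) \<circ> \<sigma>" by auto
  then show ?thesis using bij_comp[OF assms(2) bij_scale[OF assms(1)]] by simp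
qed

lemma core:
  fixes \<phi> :: "'a::field \<Rightarrow> 'a"
  assumes b: "bij \<phi>" and l: "F_linear F \<phi>" and e: "\<forall>x y. \<phi> (x * y) = P x * Q y"
  shows "\<exists>c \<sigma>. c \<noteq> 0 \<and> \<sigma> \<in> Gal F \<and> (\<forall>u. \<phi> u = c * \<sigma> u)"
proof -
  have add: "\<phi> (x + y) = \<phi> x + \<phi> y" for x y using l by (simp add: F_linear_def)
  have z: "\<phi> 0 = 0"
  proof -
    have "\<phi> 0 + \<phi> 0 = \<phi> 0 + 0" using add[of 0 0] by simp
    then show ?thesis by (rule add_left_imp_eq)
  qed
  define c where "c = \<phi> 1"
  have c0: "c \<noteq> 0"
  proof
    assume "c = 0"
    then have "\<phi> 1 = \<phi> 0" using z c_def by simp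
    then have "(1::'a) = 0" using injD[OF bij_is_inj[OF b]] by blast
    then show False by simp
  qed
  have cpq: "c = P 1 * Q 1" using e[rule_format, of 1 1] c_def by simp
  then have p0: "P 1 \<noteq> 0" and q0: "Q 1 \<noteq> 0" using c0 by auto
  have Px: "P x = \<phi> x / Q 1" for x using e[rule_format, of x 1] q0 by simp
  have Qy: "Q y = \<phi> y / P 1" for y using e[rule_format, of 1 y] p0 by simp
  define \<sigma> where "\<sigma> u = \<phi> u / c" for u
  have "\<sigma> \<in> Gal F"
    unfolding Gal_def
  proof (intro CollectI conjI allI ballI)
    have "\<sigma> = (\<lambda>u. inverse c * u) \<circ> \<phi>" unfolding \<sigma>_def by (auto simp: field_simps)
    then show "bij \<sigma>" using bij_comp[OF b bij_scale[of "inverse c"]] c0 by simp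
    show "\<sigma> (x + y) = \<sigma> x + \<sigma> y" for x y unfolding \<sigma>_def by (simp add: add add_divide_distrib)
    show "\<sigma> (x * y) = \<sigma> x * \<sigma> y" for x y
    proof -
      have "\<phi> (x * y) = P x * Q y" using e by blast
      also have "\<dots> = (\<phi> x / Q 1) * (\<phi> y / P 1)" using Px[of x] Qy[of y] by simp
      finally have "\<phi> (x * y) = (\<phi> x / Q 1) * (\<phi> y / P 1)" .
      then show ?thesis unfolding \<sigma>_def using cpq p0 q0 by (simp add: field_simps)
    qed
    show "\<sigma> 1 = 1" unfolding \<sigma>_def c_def[symmetric] using c0 by simp
    show "\<sigma> a = a" if "a \<in> F" for a
    proof -
      have "\<phi> (a * 1) = a * \<phi> 1" using l that unfolding F_linear_def by blast
      then show ?thesis unfolding \<sigma>_def c_def using c0 c_def by simp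
    qed
  qed
  moreover have "\<forall>u. \<phi> u = c * \<sigma> u" unfolding \<sigma>_def using c0 by simp
  ultimately show ?thesis using c0 by blast
qed

context cg begin

lemma cyc_sigma: assumes s: "\<sigma> \<in> Gal F"
  shows "\<sigma> (cyc_map n \<tau> a y) = (\<Sum>i<n. \<sigma> (a i) * (\<tau> ^^ i) (\<sigma> y))"
proof -
  have "\<sigma> (cyc_map n \<tau> a y) = (\<Sum>i<n. \<sigma> (a i * (\<tau> ^^ i) y))"
    unfolding cyc_map_def by (rule gal_sum[OF s])
  also have "\<dots> = (\<Sum>i<n. \<sigma> (a i) * (\<tau> ^^ i) (\<sigma> y))"
  proof (rule sum.cong)
    fix i show "\<sigma> (a i * (\<tau> ^^ i) y) = \<sigma> (a i) * (\<tau> ^^ i) (\<sigma> y)"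
      using gal_props(3)[OF s, of "a i" "(\<tau> ^^ i) y"] gal_commute[OF s, of i y] by simp
  qed simp
  finally show ?thesis .
qed

lemma cyc_scale: "cyc_map n \<tau> b (c * w) = (\<Sum>i<n. b i * (\<tau> ^^ i) c * (\<tau> ^^ i) w)"
  by (simp add: cyc_map_def gal_props(3)[OF powG] mult.assoc)

lemma ded2: assumes "\<forall>u. (\<Sum>i<n. p i * (\<tau> ^^ i) u) = (\<Sum>i<n. q i * (\<tau> ^^ i) u)"
  shows "\<forall>i<n. p i = q i"
proof -
  have "\<forall>u. (\<Sum>i<n. (p i - q i) * (\<tau> ^^ i) u) = 0"
    using assms by (simp add: left_diff_distrib sum_subtractf)
  then show ?thesis using ded by fastforce
qed


lemma lin_csig: assumes s: "\<sigma> \<in> Gal F" shows "F_linear F (\<lambda>u. c * \<sigma> u)"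
  unfolding F_linear_def using gal_props(2,3,5)[OF s] by (simp add: algebra_simps)

lemma sig_surj: assumes s: "\<sigma> \<in> Gal F" obtains x where "\<sigma> x = u"
proof -
  have "\<sigma> (inv \<sigma> u) = u" using gal_props(1)[OF s] by (simp add: bij_is_surj surj_f_inv_f)
  then show ?thesis using that by blast
qed

lemma key23: assumes bA: "bij (cyc_map n \<tau> a)"
  shows "twisted_iso F id (cyc_map n \<tau> a) id (cyc_map n \<tau> b) \<longleftrightarrow>
    (\<exists>c \<sigma>. c \<noteq> 0 \<and> \<sigma> \<in> Gal F \<and> (\<forall>i<n. \<sigma> (a i) = b i * (\<tau> ^^ i) c))"
proof
  let ?Ga = "cyc_map n \<tau> a" and ?Gb = "cyc_map n \<tau> b"
  assume "twisted_iso F id ?Ga id ?Gb"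
  then obtain \<phi> where \<phi>: "F_linear F \<phi>" "bij \<phi>" "\<forall>x y. \<phi> (x * ?Ga y) = \<phi> x * ?Gb (\<phi> y)"
    unfolding twisted_iso_def by auto
  have e: "\<forall>x y. \<phi> (x * y) = \<phi> x * (?Gb (\<phi> (inv ?Ga y)))"
  proof (intro allI)
    fix x y
    have "?Ga (inv ?Ga y) = y" using bA by (simp add: bij_is_surj surj_f_inv_f)
    then show "\<phi> (x * y) = \<phi> x * (?Gb (\<phi> (inv ?Ga y)))" using \<phi>(3)[rule_format, of x "inv ?Ga y"] by simp
  qed
  obtain c \<sigma> where cs: "c \<noteq> 0" "\<sigma> \<in> Gal F" "\<forall>u. \<phi> u = c * \<sigma> u" using core[OF \<phi>(2) \<phi>(1) e] by blast
  have "\<forall>u. (\<Sum>i<n. \<sigma> (a i) * (\<tau> ^^ i) u) = (\<Sum>i<n. (b i * (\<tau> ^^ i) c) * (\<tau> ^^ i) u)"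
  proof
    fix u
    obtain y where y: "\<sigma> y = u" using sig_surj[OF cs(2)] by blast
    have "\<phi> (1 * ?Ga y) = \<phi> 1 * ?Gb (\<phi> y)" using \<phi>(3) by blast
    then have "c * \<sigma> (?Ga y) = c * \<sigma> 1 * ?Gb (c * \<sigma> y)" using cs(3) by simp
    then have "\<sigma> (?Ga y) = ?Gb (c * u)" using cs(1) gal_props(4)[OF cs(2)] y by simp
    then show "(\<Sum>i<n. \<sigma> (a i) * (\<tau> ^^ i) u) = (\<Sum>i<n. (b i * (\<tau> ^^ i) c) * (\<tau> ^^ i) u)"
      using cyc_sigma[OF cs(2), of a y] cyc_scale[of b c u] y by simp
  qed
  then have "\<forall>i<n. \<sigma> (a i) = b i * (\<tau> ^^ i) c" by (rule ded2)
  then show "\<exists>c \<sigma>. c \<noteq> 0 \<and> \<sigma> \<in> Gal F \<and> (\<forall>i<n. \<sigma> (a i) = b i * (\<tau> ^^ i) c)" using cs by blast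
next
  let ?Ga = "cyc_map n \<tau> a" and ?Gb = "cyc_map n \<tau> b"
  assume "\<exists>c \<sigma>. c \<noteq> 0 \<and> \<sigma> \<in> Gal F \<and> (\<forall>i<n. \<sigma> (a i) = b i * (\<tau> ^^ i) c)"
  then obtain c \<sigma> where cs: "c \<noteq> 0" "\<sigma> \<in> Gal F" and h: "\<forall>i<n. \<sigma> (a i) = b i * (\<tau> ^^ i) c" by blast
  have g: "\<sigma> (?Ga y) = ?Gb (c * \<sigma> y)" for y
    unfolding cyc_sigma[OF cs(2)] cyc_scale using h by (intro sum.cong) auto
  show "twisted_iso F id ?Ga id ?Gb" unfolding twisted_iso_def
  proof (intro exI conjI allI)
    show "F_linear F (\<lambda>u. c * \<sigma> u)" by (rule lin_csig[OF cs(2)])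
    show "bij (\<lambda>u. c * \<sigma> u)" using bij_csig[OF cs(1) gal_props(1)[OF cs(2)]] .
    fix x y
    show "c * \<sigma> (id x * ?Ga y) = id (c * \<sigma> x) * ?Gb (c * \<sigma> y)"
      using g[of y] gal_props(3)[OF cs(2), of x "?Ga y"] by simp
  qed
qed

lemma key1: assumes bY: "bij (cyc_map n \<tau> ya)" and bg: "bij g" and y0: "ya 0 = 1" and z0: "za 0 = 1"
  shows "twisted_iso F (cyc_map n \<tau> ya) g (cyc_map n \<tau> za) g' \<longleftrightarrow>
    (\<exists>c \<sigma>. c \<noteq> 0 \<and> \<sigma> \<in> Gal F \<and> (\<forall>i<n. za i * (\<tau> ^^ i) c = c * \<sigma> (ya i)) \<and>
        (\<forall>u. g' (c * \<sigma> u) = \<sigma> (g u)))"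
proof
  let ?Gy = "cyc_map n \<tau> ya" and ?Gz = "cyc_map n \<tau> za"
  assume "twisted_iso F ?Gy g ?Gz g'"
  then obtain \<phi> where \<phi>: "F_linear F \<phi>" "bij \<phi>" and E: "\<forall>x y. \<phi> (?Gy x * g y) = ?Gz (\<phi> x) * g' (\<phi> y)"
    unfolding twisted_iso_def by auto
  have iy: "?Gy (inv ?Gy x) = x" for x using bY by (simp add: bij_is_surj surj_f_inv_f)
  have ig: "g (inv g x) = x" for x using bg by (simp add: bij_is_surj surj_f_inv_f)
  have e: "\<forall>x y. \<phi> (x * y) = ?Gz (\<phi> (inv ?Gy x)) * g' (\<phi> (inv g y))"
  proof (intro allI)
    fix x y
    show "\<phi> (x * y) = ?Gz (\<phi> (inv ?Gy x)) * g' (\<phi> (inv g y))"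
      using E[rule_format, of "inv ?Gy x" "inv g y"] iy ig by simp
  qed
  obtain c \<sigma> where cs: "c \<noteq> 0" "\<sigma> \<in> Gal F" and ph: "\<forall>u. \<phi> u = c * \<sigma> u"
    using core[OF \<phi>(2) \<phi>(1) e] by blast
  define x0 where "x0 = inv ?Gy 1"
  define y0 where "y0 = inv g 1"
  have x0: "?Gy x0 = 1" and y0': "g y0 = 1" using iy ig x0_def y0_def by auto
  define \<alpha> where "\<alpha> = ?Gz (\<phi> x0)"
  define \<beta> where "\<beta> = g' (\<phi> y0)"
  have s1: "\<sigma> 1 = 1" using gal_props(4)[OF cs(2)] .
  have cab: "c = \<alpha> * \<beta>"
  proof -
    have "\<phi> (?Gy x0 * g y0) = \<alpha> * \<beta>" using E \<alpha>_def \<beta>_def by blast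
    then show ?thesis using x0 y0' ph s1 by simp
  qed
  then have a0: "\<alpha> \<noteq> 0" and b0: "\<beta> \<noteq> 0" using cs(1) by auto
  have Ex: "?Gz (c * \<sigma> x) = \<alpha> * \<sigma> (?Gy x)" for x
  proof -
    have "\<phi> (?Gy x * g y0) = ?Gz (\<phi> x) * \<beta>" using E \<beta>_def by blast
    then have "c * \<sigma> (?Gy x) = ?Gz (c * \<sigma> x) * \<beta>" using y0' ph by simp
    then have "\<beta> * (\<alpha> * \<sigma> (?Gy x)) = \<beta> * ?Gz (c * \<sigma> x)" using cab by (simp add: ac_simps)
    then show ?thesis using b0 by simp
  qed
  have "\<forall>u. (\<Sum>i<n. (za i * (\<tau> ^^ i) c) * (\<tau> ^^ i) u) = (\<Sum>i<n. (\<alpha> * \<sigma> (ya i)) * (\<tau> ^^ i) u)"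
  proof
    fix u
    obtain x where x: "\<sigma> x = u" using sig_surj[OF cs(2)] by blast
    show "(\<Sum>i<n. (za i * (\<tau> ^^ i) c) * (\<tau> ^^ i) u) = (\<Sum>i<n. (\<alpha> * \<sigma> (ya i)) * (\<tau> ^^ i) u)"
      using Ex[of x] cyc_sigma[OF cs(2), of ya x] cyc_scale[of za c "\<sigma> x"] x
      by (simp add: sum_distrib_left mult.assoc)
  qed
  then have co: "\<forall>i<n. za i * (\<tau> ^^ i) c = \<alpha> * \<sigma> (ya i)" by (rule ded2)
  then have "za 0 * (\<tau> ^^ 0) c = \<alpha> * \<sigma> (ya 0)" using n1 by auto
  then have ca: "c = \<alpha>" using z0 y0 s1 by simp
  have gg: "g' (c * \<sigma> u) = \<sigma> (g u)" for u
  proof -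
    have "\<phi> (?Gy x0 * g u) = \<alpha> * g' (\<phi> u)" using E \<alpha>_def by blast
    then have "c * \<sigma> (g u) = \<alpha> * g' (c * \<sigma> u)" using x0 ph by simp
    then have "c * \<sigma> (g u) = c * g' (c * \<sigma> u)" using ca by simp
    then show ?thesis using cs(1) by simp
  qed
  show "\<exists>c \<sigma>. c \<noteq> 0 \<and> \<sigma> \<in> Gal F \<and> (\<forall>i<n. za i * (\<tau> ^^ i) c = c * \<sigma> (ya i)) \<and>
        (\<forall>u. g' (c * \<sigma> u) = \<sigma> (g u))" using cs co ca gg by blast
next
  let ?Gy = "cyc_map n \<tau> ya" and ?Gz = "cyc_map n \<tau> za"
  assume "\<exists>c \<sigma>. c \<noteq> 0 \<and> \<sigma> \<in> Gal F \<and> (\<forall>i<n. za i * (\<tau> ^^ i) c = c * \<sigma> (ya i)) \<and>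
        (\<forall>u. g' (c * \<sigma> u) = \<sigma> (g u))"
  then obtain c \<sigma> where cs: "c \<noteq> 0" "\<sigma> \<in> Gal F" and h: "\<forall>i<n. za i * (\<tau> ^^ i) c = c * \<sigma> (ya i)"
    and gg: "\<forall>u. g' (c * \<sigma> u) = \<sigma> (g u)" by blast
  have G: "?Gz (c * \<sigma> x) = c * \<sigma> (?Gy x)" for x
    unfolding cyc_sigma[OF cs(2)] cyc_scale sum_distrib_left using h by (intro sum.cong) (auto simp: mult.assoc)
  show "twisted_iso F ?Gy g ?Gz g'" unfolding twisted_iso_def
  proof (intro exI conjI allI)
    show "F_linear F (\<lambda>u. c * \<sigma> u)" by (rule lin_csig[OF cs(2)])
    show "bij (\<lambda>u. c * \<sigma> u)" using bij_csig[OF cs(1) gal_props(1)[OF cs(2)]] .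
    fix x y
    show "c * \<sigma> (?Gy x * g y) = ?Gz (c * \<sigma> x) * g' (c * \<sigma> y)"
      using G[of x] gg gal_props(3)[OF cs(2), of "?Gy x" "g y"] by simp
  qed
qed


lemma N_mult: "field_norm F (x * y) = field_norm F x * field_norm F y"
  unfolding field_norm_def by (simp add: gal_props(3) prod.distrib)

lemma N_inv: "field_norm F (inverse x) = inverse (field_norm F x)"
proof -
  have "field_norm F (inverse x) = prod (inverse \<circ> (\<lambda>\<sigma>. \<sigma> x)) (Gal F)"
    unfolding field_norm_def by (rule prod.cong) (auto simp: gal_inverse)
  then show ?thesis unfolding field_norm_def using prod_inversef[of "\<lambda>\<sigma>. \<sigma> x" "Gal F"] by (simp add: comp_def)
qed

lemma N_one: "field_norm F 1 = 1"
  unfolding field_norm_def by (simp add: gal_props(4))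

lemma N_nz: "x \<noteq> 0 \<Longrightarrow> field_norm F x \<noteq> 0"
  unfolding field_norm_def using finG by (simp add: gal_eq0)

lemma N_sig: assumes s: "\<sigma> \<in> Gal F" shows "field_norm F (\<sigma> x) = field_norm F x"
proof -
  let ?h = "\<lambda>\<rho>. \<rho> \<circ> \<sigma>"
  have inj: "inj_on ?h (Gal F)"
  proof (rule inj_onI)
    fix \<rho> \<rho>' assume "\<rho> \<circ> \<sigma> = \<rho>' \<circ> \<sigma>"
    then have "\<rho> (\<sigma> (inv \<sigma> u)) = \<rho>' (\<sigma> (inv \<sigma> u))" for u by (metis comp_apply)
    moreover have "\<sigma> (inv \<sigma> u) = u" for u using gal_props(1)[OF s] by (simp add: bij_is_surj surj_f_inv_f)
    ultimately show "\<rho> = \<rho>'" by auto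
  qed
  have "?h ` Gal F \<subseteq> Gal F" using gal_comp s by blast
  then have im: "?h ` Gal F = Gal F" using endo_inj_surj[OF finG _ inj] by blast
  have "field_norm F x = prod (\<lambda>\<rho>. \<rho> x) (?h ` Gal F)" unfolding field_norm_def using im by simp
  also have "\<dots> = prod ((\<lambda>\<rho>. \<rho> x) \<circ> ?h) (Gal F)" by (rule prod.reindex[OF inj])
  also have "\<dots> = field_norm F (\<sigma> x)" unfolding field_norm_def by simp
  finally show ?thesis by simp
qed

lemma M_eq: assumes M: "norm_reps F M" and y1: "y1 \<in> M" and z1: "z1 \<in> M" and v: "v \<noteq> 0"
  and s: "\<sigma> \<in> Gal F" and e: "z1 = \<tau> v * inverse v * \<sigma> y1"
  shows "z1 = y1"
proof -
  have y0: "y1 \<noteq> 0" and z0: "z1 \<noteq> 0" using M y1 z1 unfolding norm_reps_def by auto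
  have u: "\<exists>!m. m \<in> M \<and> (\<exists>s\<in>S_norm1 F. z1 = m * s)" using M z0 unfolding norm_reps_def by blast
  have a: "\<exists>s\<in>S_norm1 F. z1 = z1 * s" by (rule bexI[of _ 1]) (auto simp: S_norm1_def N_one)
  have Nz: "field_norm F z1 = field_norm F y1"
    using e N_mult N_inv N_sig[OF s] N_sig[OF tauG] N_nz[OF v] by simp
  have b: "\<exists>s\<in>S_norm1 F. z1 = y1 * s"
  proof (rule bexI[of _ "z1 * inverse y1"])
    show "z1 = y1 * (z1 * inverse y1)" using y0 by simp
    show "z1 * inverse y1 \<in> S_norm1 F" unfolding S_norm1_def using Nz N_mult N_inv N_nz[OF y0] by simp
  qed
  show ?thesis using u a b y1 z1 by blast
qed

lemma inv_sig: assumes s: "\<sigma> \<in> Gal F" shows "inv \<sigma> (\<sigma> u) = u" "\<sigma> (inv \<sigma> u) = u"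
  using gal_props(1)[OF s] by (auto simp: bij_is_inj bij_is_surj surj_f_inv_f)

lemma cond_conv: assumes s: "\<sigma> \<in> Gal F"
  shows "(\<exists>c. c \<noteq> 0 \<and> (\<forall>i<n. (z(0:=1)) i * (\<tau> ^^ i) c = c * \<sigma> ((y(0:=1)) i)) \<and>
        (\<forall>u. g' (c * \<sigma> u) = \<sigma> (g u))) \<longleftrightarrow>
    (\<exists>v. v \<noteq> 0 \<and> (\<forall>i\<in>{1..n-1}. z i = (\<tau> ^^ i) v * inverse v * \<sigma> (y i)) \<and>
        g' = (\<lambda>u. \<sigma> (g (inv \<sigma> (v * u)))))"
proof -
  have eqi: "z i * (\<tau> ^^ i) (inverse v) = inverse v * \<sigma> (y i) \<longleftrightarrow>
       z i = (\<tau> ^^ i) v * inverse v * \<sigma> (y i)" if v: "v \<noteq> 0" for v i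
  proof -
    have t: "(\<tau> ^^ i) v \<noteq> 0" using v gal_eq0[OF powG] by simp
    have ti: "(\<tau> ^^ i) (inverse v) = inverse ((\<tau> ^^ i) v)" by (rule gal_inverse[OF powG])
    show ?thesis unfolding ti using t v by (auto simp: field_simps)
  qed
  have idx: "(i < n \<and> i \<noteq> 0) \<longleftrightarrow> i \<in> {1..n-1}" for i by auto
  have eqg: "(\<forall>u. g' (inverse v * \<sigma> u) = \<sigma> (g u)) \<longleftrightarrow> g' = (\<lambda>u. \<sigma> (g (inv \<sigma> (v * u))))"
    if v: "v \<noteq> 0" for v
  proof
    assume h: "\<forall>u. g' (inverse v * \<sigma> u) = \<sigma> (g u)"
    show "g' = (\<lambda>u. \<sigma> (g (inv \<sigma> (v * u))))"
    proof
      fix w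
      have "g' (inverse v * \<sigma> (inv \<sigma> (v * w))) = \<sigma> (g (inv \<sigma> (v * w)))" using h by blast
      moreover have "inverse v * (v * w) = w" using v by (simp add: mult.assoc[symmetric])
      ultimately show "g' w = \<sigma> (g (inv \<sigma> (v * w)))" using inv_sig[OF s] by simp
    qed
  next
    assume "g' = (\<lambda>u. \<sigma> (g (inv \<sigma> (v * u))))"
    moreover have vw: "v * (inverse v * w) = w" for w using v by (simp add: mult.assoc[symmetric])
    ultimately show "\<forall>u. g' (inverse v * \<sigma> u) = \<sigma> (g u)" by (simp add: vw inv_sig[OF s])
  qed
  show ?thesis
  proof
    assume "\<exists>c. c \<noteq> 0 \<and> (\<forall>i<n. (z(0:=1)) i * (\<tau> ^^ i) c = c * \<sigma> ((y(0:=1)) i)) \<and>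
        (\<forall>u. g' (c * \<sigma> u) = \<sigma> (g u))"
    then obtain c where c: "c \<noteq> 0" "\<forall>i<n. (z(0:=1)) i * (\<tau> ^^ i) c = c * \<sigma> ((y(0:=1)) i)"
      "\<forall>u. g' (c * \<sigma> u) = \<sigma> (g u)" by blast
    define v where "v = inverse c"
    have v: "v \<noteq> 0" "c = inverse v" using c(1) v_def by auto
    have "\<forall>i\<in>{1..n-1}. z i = (\<tau> ^^ i) v * inverse v * \<sigma> (y i)"
    proof
      fix i assume "i \<in> {1..n-1}"
      then have "i < n" "i \<noteq> 0" using idx by blast+
      then have "z i * (\<tau> ^^ i) (inverse v) = inverse v * \<sigma> (y i)" using c(2) v(2) by auto
      then show "z i = (\<tau> ^^ i) v * inverse v * \<sigma> (y i)" using eqi[OF v(1)] by blast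
    qed
    moreover have "g' = (\<lambda>u. \<sigma> (g (inv \<sigma> (v * u))))" using eqg[OF v(1)] c(3) v(2) by blast
    ultimately show "\<exists>v. v \<noteq> 0 \<and> (\<forall>i\<in>{1..n-1}. z i = (\<tau> ^^ i) v * inverse v * \<sigma> (y i)) \<and>
        g' = (\<lambda>u. \<sigma> (g (inv \<sigma> (v * u))))" using v by blast
  next
    assume "\<exists>v. v \<noteq> 0 \<and> (\<forall>i\<in>{1..n-1}. z i = (\<tau> ^^ i) v * inverse v * \<sigma> (y i)) \<and>
        g' = (\<lambda>u. \<sigma> (g (inv \<sigma> (v * u))))"
    then obtain v where v: "v \<noteq> 0" "\<forall>i\<in>{1..n-1}. z i = (\<tau> ^^ i) v * inverse v * \<sigma> (y i)"
       "g' = (\<lambda>u. \<sigma> (g (inv \<sigma> (v * u))))" by blast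
    have "\<forall>i<n. (z(0:=1)) i * (\<tau> ^^ i) (inverse v) = inverse v * \<sigma> ((y(0:=1)) i)"
    proof (intro allI impI)
      fix i assume i: "i < n"
      show "(z(0:=1)) i * (\<tau> ^^ i) (inverse v) = inverse v * \<sigma> ((y(0:=1)) i)"
      proof (cases "i = 0")
        case True then show ?thesis using gal_props(4)[OF s] by simp
      next
        case False
        then have "i \<in> {1..n-1}" using i idx by blast
        then have "z i = (\<tau> ^^ i) v * inverse v * \<sigma> (y i)" using v(2) by blast
        then have "z i * (\<tau> ^^ i) (inverse v) = inverse v * \<sigma> (y i)" using eqi[OF v(1)] by blast
        then show ?thesis using False by simp
      qed
    qed
    moreover have "\<forall>u. g' (inverse v * \<sigma> u) = \<sigma> (g u)" using eqg[OF v(1)] v(3) by blast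
    ultimately show "\<exists>c. c \<noteq> 0 \<and> (\<forall>i<n. (z(0:=1)) i * (\<tau> ^^ i) c = c * \<sigma> ((y(0:=1)) i)) \<and>
        (\<forall>u. g' (c * \<sigma> u) = \<sigma> (g u))" using v(1) by (intro exI[of _ "inverse v"]) auto
  qed
qed


lemma part1: assumes n2: "2 \<le> n" and M: "norm_reps F M" and g: "g \<in> GL F" and g': "g' \<in> GL F"
  and y1: "y 1 \<in> M" and z1: "z 1 \<in> M" and bY: "A0_norm_nonzero n \<tau> (y(0 := 1))"
  shows "twisted_iso F (cyc_map n \<tau> (y(0 := 1))) g (cyc_map n \<tau> (z(0 := 1))) g'
          \<longleftrightarrow> z 1 = y 1 \<and> (\<exists>\<sigma>\<in>Gal F. cond1 n \<tau> y z g g' \<sigma>)"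
proof -
  have bg: "bij g" using g by (simp add: GL_def)
  have bY': "bij (cyc_map n \<tau> (y(0 := 1)))" using bY by (simp add: A0_norm_nonzero_def)
  have y0: "(y(0:=1)) 0 = 1" and z0: "(z(0:=1)) 0 = 1" by simp_all
  note K = key1[where ya="y(0:=1)" and za="z(0:=1)" and g=g and g'=g', OF bY' bg y0 z0]
  have one: "(1::nat) \<in> {1..n-1}" using n2 by auto
  show ?thesis
  proof
    assume "twisted_iso F (cyc_map n \<tau> (y(0 := 1))) g (cyc_map n \<tau> (z(0 := 1))) g'"
    from K[THEN iffD1, OF this] obtain c \<sigma> where s: "\<sigma> \<in> Gal F" and c: "c \<noteq> 0 \<and> (\<forall>i<n. (z(0:=1)) i * (\<tau> ^^ i) c = c * \<sigma> ((y(0:=1)) i)) \<and>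
        (\<forall>u. g' (c * \<sigma> u) = \<sigma> (g u))" by blast
    then obtain v where v: "v \<noteq> 0" "\<forall>i\<in>{1..n-1}. z i = (\<tau> ^^ i) v * inverse v * \<sigma> (y i)"
        "g' = (\<lambda>u. \<sigma> (g (inv \<sigma> (v * u))))" using cond_conv[OF s, of z y g' g] by blast
    have ez: "z 1 = \<tau> v * inverse v * \<sigma> (y 1)" using v(2) one by simp
    have zy: "z 1 = y 1" by (rule M_eq[OF M y1 z1 v(1) s ez])
    have "cond1 n \<tau> y z g g' \<sigma>" unfolding cond1_def using v ez zy by auto
    then show "z 1 = y 1 \<and> (\<exists>\<sigma>\<in>Gal F. cond1 n \<tau> y z g g' \<sigma>)" using zy s by blast
  next
    assume "z 1 = y 1 \<and> (\<exists>\<sigma>\<in>Gal F. cond1 n \<tau> y z g g' \<sigma>)"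
    then obtain \<sigma> where s: "\<sigma> \<in> Gal F" and c1: "cond1 n \<tau> y z g g' \<sigma>" by blast
    then have "\<exists>v. v \<noteq> 0 \<and> (\<forall>i\<in>{1..n-1}. z i = (\<tau> ^^ i) v * inverse v * \<sigma> (y i)) \<and>
        g' = (\<lambda>u. \<sigma> (g (inv \<sigma> (v * u))))" unfolding cond1_def by blast
    then obtain c where "c \<noteq> 0 \<and> (\<forall>i<n. (z(0:=1)) i * (\<tau> ^^ i) c = c * \<sigma> ((y(0:=1)) i)) \<and>
        (\<forall>u. g' (c * \<sigma> u) = \<sigma> (g u))" using cond_conv[OF s, of z y g' g] by blast
    then have "\<exists>c \<sigma>. c \<noteq> 0 \<and> \<sigma> \<in> Gal F \<and> (\<forall>i<n. (z(0:=1)) i * (\<tau> ^^ i) c = c * \<sigma> ((y(0:=1)) i)) \<and>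
        (\<forall>u. g' (c * \<sigma> u) = \<sigma> (g u))" using s by blast
    then show "twisted_iso F (cyc_map n \<tau> (y(0 := 1))) g (cyc_map n \<tau> (z(0 := 1))) g'"
      using K by blast
  qed
qed

lemma part1b: assumes y1: "y 1 \<noteq> 0" and lg: "F_linear F g"
  shows "cond1 n \<tau> y z g g' id \<longleftrightarrow>
          (\<forall>i\<in>{1..n-1}. z i = y i) \<and> (\<exists>a\<in>F. a \<noteq> 0 \<and> g' = (\<lambda>u. a * g u))"
proof
  assume "cond1 n \<tau> y z g g' id"
  then obtain v where v: "v \<noteq> 0" "y 1 = \<tau> v * inverse v * y 1"
    "\<forall>i\<in>{1..n-1}. z i = (\<tau> ^^ i) v * inverse v * y i" "g' = (\<lambda>u. g (v * u))"
    unfolding cond1_def by (auto simp: inv_id)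
  have "1 * y 1 = (\<tau> v * inverse v) * y 1" using v(2) by simp
  then have "\<tau> v * inverse v = 1" using y1 by (metis mult_right_cancel)
  then have tv: "\<tau> v = v" using v(1) by (simp add: field_simps)
  have vF: "v \<in> F" by (rule artin[OF tv])
  have "\<forall>i\<in>{1..n-1}. z i = y i" using v(3) fix_pow[OF tv] v(1) by simp
  moreover have "g' = (\<lambda>u. v * g u)" using v(4) lg vF by (simp add: F_linear_def)
  ultimately show "(\<forall>i\<in>{1..n-1}. z i = y i) \<and> (\<exists>a\<in>F. a \<noteq> 0 \<and> g' = (\<lambda>u. a * g u))"
    using vF v(1) by blast
next
  assume "(\<forall>i\<in>{1..n-1}. z i = y i) \<and> (\<exists>a\<in>F. a \<noteq> 0 \<and> g' = (\<lambda>u. a * g u))"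
  then obtain a where h: "\<forall>i\<in>{1..n-1}. z i = y i" "a \<in> F" "a \<noteq> 0" "g' = (\<lambda>u. a * g u)" by blast
  have ta: "\<tau> a = a" using gal_props(5)[OF tauG h(2)] .
  show "cond1 n \<tau> y z g g' id" unfolding cond1_def
  proof (intro exI[of _ a] conjI)
    show "a \<noteq> 0" by fact
    show "y 1 = \<tau> a * inverse a * id (y 1)" using ta h(3) by simp
    show "\<forall>i\<in>{1..n-1}. z i = (\<tau> ^^ i) a * inverse a * id (y i)" using h(1,3) fix_pow[OF ta] by simp
    show "g' = (\<lambda>u. id (g (inv id (a * u))))" using h(2,4) lg by (simp add: inv_id F_linear_def)
  qed
qed

lemma inv_lin: assumes a: "a \<in> F" shows "inv \<tau> (a * w) = a * inv \<tau> w"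
proof -
  have "\<tau> (a * inv \<tau> w) = a * w" using gal_props(3,5)[OF tauG] a inv_sig(2)[OF tauG] by simp
  then show ?thesis using inv_sig(1)[OF tauG, of "a * inv \<tau> w"] by simp
qed

lemma part1c: assumes y1: "y 1 \<noteq> 0" and lg: "F_linear F g"
  shows "cond1 n \<tau> y z g g' \<tau> \<longleftrightarrow>
          (\<forall>i\<in>{1..n-1}. z i = (\<tau> ^^ i) (inverse (y 1)) * y 1 * \<tau> (y i)) \<and>
          (\<exists>a\<in>F. a \<noteq> 0 \<and> g' = (\<lambda>u. a * \<tau> (g (inv \<tau> (inverse (y 1) * u)))))"
proof -
  have gl: "g (a * x) = a * g x" if "a \<in> F" for a x using lg that by (simp add: F_linear_def)
  have tl: "\<tau> (a * x) = a * \<tau> x" if "a \<in> F" for a x using gal_props(3,5)[OF tauG] that by simp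
  have ty1: "\<tau> (y 1) \<noteq> 0" using y1 gal_eq0[OF tauG] by simp
  have gform: "(\<lambda>u. \<tau> (g (inv \<tau> (a * inverse (y 1) * u)))) = (\<lambda>u. a * \<tau> (g (inv \<tau> (inverse (y 1) * u))))"
    if "a \<in> F" for a
    using that by (simp add: mult.assoc inv_lin gl tl)
  have zform: "(\<tau> ^^ i) (a * inverse (y 1)) * inverse (a * inverse (y 1)) * \<tau> (y i) =
       (\<tau> ^^ i) (inverse (y 1)) * y 1 * \<tau> (y i)" if "a \<in> F" "a \<noteq> 0" for a i
  proof -
    have "(\<tau> ^^ i) (a * inverse (y 1)) = a * (\<tau> ^^ i) (inverse (y 1))"
      using gal_props(3)[OF powG] pow_fixF[OF that(1)] by simp
    then show ?thesis using that y1 by (simp add: field_simps)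
  qed
  show ?thesis
  proof
    assume "cond1 n \<tau> y z g g' \<tau>"
    then obtain v where v: "v \<noteq> 0" "y 1 = \<tau> v * inverse v * \<tau> (y 1)"
      "\<forall>i\<in>{1..n-1}. z i = (\<tau> ^^ i) v * inverse v * \<tau> (y i)" "g' = (\<lambda>u. \<tau> (g (inv \<tau> (v * u))))"
      unfolding cond1_def by blast
    define a where "a = v * y 1"
    have "\<tau> a = \<tau> v * \<tau> (y 1)" unfolding a_def using gal_props(3)[OF tauG] by simp
    also have "\<dots> = a" unfolding a_def using v(1,2) by (simp add: field_simps)
    finally have aF: "a \<in> F" by (rule artin)
    have a0: "a \<noteq> 0" using v(1) y1 a_def by simp
    have va: "v = a * inverse (y 1)" using a_def y1 by simp
    show "(\<forall>i\<in>{1..n-1}. z i = (\<tau> ^^ i) (inverse (y 1)) * y 1 * \<tau> (y i)) \<and>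
          (\<exists>a\<in>F. a \<noteq> 0 \<and> g' = (\<lambda>u. a * \<tau> (g (inv \<tau> (inverse (y 1) * u)))))"
      using v(3,4) va zform[OF aF a0] gform[OF aF] aF a0 by auto
  next
    assume "(\<forall>i\<in>{1..n-1}. z i = (\<tau> ^^ i) (inverse (y 1)) * y 1 * \<tau> (y i)) \<and>
          (\<exists>a\<in>F. a \<noteq> 0 \<and> g' = (\<lambda>u. a * \<tau> (g (inv \<tau> (inverse (y 1) * u)))))"
    then obtain a where h: "\<forall>i\<in>{1..n-1}. z i = (\<tau> ^^ i) (inverse (y 1)) * y 1 * \<tau> (y i)"
      "a \<in> F" "a \<noteq> 0" "g' = (\<lambda>u. a * \<tau> (g (inv \<tau> (inverse (y 1) * u))))" by blast
    show "cond1 n \<tau> y z g g' \<tau>" unfolding cond1_def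
    proof (intro exI[of _ "a * inverse (y 1)"] conjI)
      show "a * inverse (y 1) \<noteq> 0" using h(3) y1 by simp
      have "\<tau> (a * inverse (y 1)) = a * inverse (\<tau> (y 1))"
        using tl[OF h(2)] gal_inverse[OF tauG] by simp
      then show "y 1 = \<tau> (a * inverse (y 1)) * inverse (a * inverse (y 1)) * \<tau> (y 1)"
        using h(3) y1 ty1 by (simp add: field_simps)
      show "\<forall>i\<in>{1..n-1}. z i = (\<tau> ^^ i) (a * inverse (y 1)) * inverse (a * inverse (y 1)) * \<tau> (y i)"
      proof
        fix i assume i: "i \<in> {1..n-1}"
        have "z i = (\<tau> ^^ i) (inverse (y 1)) * y 1 * \<tau> (y i)" using h(1) i by blast
        then show "z i = (\<tau> ^^ i) (a * inverse (y 1)) * inverse (a * inverse (y 1)) * \<tau> (y i)"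
          using zform[OF h(2,3), of i] by (rule trans[OF _ sym])
      qed
      show "g' = (\<lambda>u. \<tau> (g (inv \<tau> (a * inverse (y 1) * u))))" using h(4) gform[OF h(2)] by simp
    qed
  qed
qed

lemma part2: assumes b: "A0_norm_nonzero n \<tau> (x(0 := 0))"
  shows "twisted_iso F id (cyc_map n \<tau> (x(0 := 0))) id (cyc_map n \<tau> (w(0 := 0)))
          \<longleftrightarrow> (\<exists>v \<sigma>. v \<noteq> 0 \<and> \<sigma> \<in> Gal F \<and> (\<forall>i\<in>{1..n-1}. w i = \<sigma> (x i) * (\<tau> ^^ i) v))"
proof -
  have b': "bij (cyc_map n \<tau> (x(0 := 0)))" using b by (simp add: A0_norm_nonzero_def)
  have ti: "(\<tau> ^^ i) (inverse v) = inverse ((\<tau> ^^ i) v)" for i v by (rule gal_inverse[OF powG])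
  have nz: "v \<noteq> 0 \<Longrightarrow> (\<tau> ^^ i) v \<noteq> 0" for i v using gal_eq0[OF powG] by simp
  have idx: "(i < n \<and> i \<noteq> 0) \<longleftrightarrow> i \<in> {1..n-1}" for i by auto
  show ?thesis unfolding key23[OF b']
  proof
    assume "\<exists>c \<sigma>. c \<noteq> 0 \<and> \<sigma> \<in> Gal F \<and> (\<forall>i<n. \<sigma> ((x(0:=0)) i) = (w(0:=0)) i * (\<tau> ^^ i) c)"
    then obtain c \<sigma> where h: "c \<noteq> 0" "\<sigma> \<in> Gal F" "\<forall>i<n. \<sigma> ((x(0:=0)) i) = (w(0:=0)) i * (\<tau> ^^ i) c" by blast
    have "\<forall>i\<in>{1..n-1}. w i = \<sigma> (x i) * (\<tau> ^^ i) (inverse c)"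
    proof
      fix i assume "i \<in> {1..n-1}"
      then have i: "i < n" "i \<noteq> 0" using idx by blast+
      then have "\<sigma> (x i) = w i * (\<tau> ^^ i) c" using h(3) by auto
      then show "w i = \<sigma> (x i) * (\<tau> ^^ i) (inverse c)" unfolding ti using nz[OF h(1), of i] by simp
    qed
    then show "\<exists>v \<sigma>. v \<noteq> 0 \<and> \<sigma> \<in> Gal F \<and> (\<forall>i\<in>{1..n-1}. w i = \<sigma> (x i) * (\<tau> ^^ i) v)"
      using h(1,2) by (intro exI[of _ "inverse c"] exI[of _ \<sigma>]) auto
  next
    assume "\<exists>v \<sigma>. v \<noteq> 0 \<and> \<sigma> \<in> Gal F \<and> (\<forall>i\<in>{1..n-1}. w i = \<sigma> (x i) * (\<tau> ^^ i) v)"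
    then obtain v \<sigma> where h: "v \<noteq> 0" "\<sigma> \<in> Gal F" "\<forall>i\<in>{1..n-1}. w i = \<sigma> (x i) * (\<tau> ^^ i) v" by blast
    have "\<forall>i<n. \<sigma> ((x(0:=0)) i) = (w(0:=0)) i * (\<tau> ^^ i) (inverse v)"
    proof (intro allI impI)
      fix i assume i: "i < n"
      show "\<sigma> ((x(0:=0)) i) = (w(0:=0)) i * (\<tau> ^^ i) (inverse v)"
      proof (cases "i = 0")
        case True then show ?thesis using gal_zero[OF h(2)] by simp
      next
        case False
        then have "w i = \<sigma> (x i) * (\<tau> ^^ i) v" using h(3) i idx by blast
        then show ?thesis unfolding ti using False nz[OF h(1), of i] by simp
      qed
    qed
    then show "\<exists>c \<sigma>. c \<noteq> 0 \<and> \<sigma> \<in> Gal F \<and> (\<forall>i<n. \<sigma> ((x(0:=0)) i) = (w(0:=0)) i * (\<tau> ^^ i) c)"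
      using h(1,2) by (intro exI[of _ "inverse v"] exI[of _ \<sigma>]) auto
  qed
qed

lemma part3: assumes b: "A0_norm_nonzero n \<tau> (x(0 := 1))"
  shows "twisted_iso F id (cyc_map n \<tau> (x(0 := 1))) id (cyc_map n \<tau> (w(0 := 1)))
          \<longleftrightarrow> (\<exists>\<sigma>\<in>Gal F. \<forall>i\<in>{1..n-1}. w i = \<sigma> (x i))"
proof -
  have b': "bij (cyc_map n \<tau> (x(0 := 1)))" using b by (simp add: A0_norm_nonzero_def)
  have idx: "(i < n \<and> i \<noteq> 0) \<longleftrightarrow> i \<in> {1..n-1}" for i by auto
  have t1: "(\<tau> ^^ i) 1 = 1" for i using gal_props(4)[OF powG] .
  show ?thesis unfolding key23[OF b']
  proof
    assume "\<exists>c \<sigma>. c \<noteq> 0 \<and> \<sigma> \<in> Gal F \<and> (\<forall>i<n. \<sigma> ((x(0:=1)) i) = (w(0:=1)) i * (\<tau> ^^ i) c)"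
    then obtain c \<sigma> where h: "c \<noteq> 0" "\<sigma> \<in> Gal F" "\<forall>i<n. \<sigma> ((x(0:=1)) i) = (w(0:=1)) i * (\<tau> ^^ i) c" by blast
    have "\<sigma> 1 = 1 * (\<tau> ^^ 0) c" using h(3) n1 by auto
    then have c1: "c = 1" using gal_props(4)[OF h(2)] by simp
    have "\<forall>i\<in>{1..n-1}. w i = \<sigma> (x i)"
    proof
      fix i assume "i \<in> {1..n-1}"
      then have i: "i < n" "i \<noteq> 0" using idx by blast+
      then show "w i = \<sigma> (x i)" using h(3) c1 t1 by auto
    qed
    then show "\<exists>\<sigma>\<in>Gal F. \<forall>i\<in>{1..n-1}. w i = \<sigma> (x i)" using h(2) by blast
  next
    assume "\<exists>\<sigma>\<in>Gal F. \<forall>i\<in>{1..n-1}. w i = \<sigma> (x i)"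
    then obtain \<sigma> where h: "\<sigma> \<in> Gal F" "\<forall>i\<in>{1..n-1}. w i = \<sigma> (x i)" by blast
    have "\<forall>i<n. \<sigma> ((x(0:=1)) i) = (w(0:=1)) i * (\<tau> ^^ i) 1"
    proof (intro allI impI)
      fix i assume i: "i < n"
      show "\<sigma> ((x(0:=1)) i) = (w(0:=1)) i * (\<tau> ^^ i) 1"
      proof (cases "i = 0")
        case True then show ?thesis using gal_props(4)[OF h(1)] by simp
      next
        case False
        then show ?thesis using h(2) i idx t1 by auto
      qed
    qed
    then show "\<exists>c \<sigma>. c \<noteq> 0 \<and> \<sigma> \<in> Gal F \<and> (\<forall>i<n. \<sigma> ((x(0:=1)) i) = (w(0:=1)) i * (\<tau> ^^ i) c)"
      using h(1) by (intro exI[of _ "1"] exI[of _ \<sigma>]) auto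
  qed
qed

end


theorem mainTheorem17:
  fixes F :: "'a::field set" and n :: nat and \<tau> :: "'a \<Rightarrow> 'a" and M :: "'a set"
  assumes cyc: "cyclic_galois F n \<tau>"
    and n2: "2 \<le> n"
    and M: "norm_reps F M"
  shows
   "(\<forall>(y::nat \<Rightarrow> 'a) z g g'. g \<in> GL F \<longrightarrow> g' \<in> GL F \<longrightarrow>
       y 1 \<in> M \<longrightarrow> z 1 \<in> M \<longrightarrow> (\<forall>i\<in>{2..n-1}. y i \<noteq> 0 \<and> z i \<noteq> 0) \<longrightarrow>
       A0_norm_nonzero n \<tau> (y(0 := 1)) \<longrightarrow> A0_norm_nonzero n \<tau> (z(0 := 1)) \<longrightarrow>
       (twisted_iso F (cyc_map n \<tau> (y(0 := 1))) g (cyc_map n \<tau> (z(0 := 1))) g'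
          \<longleftrightarrow> z 1 = y 1 \<and> (\<exists>\<sigma>\<in>Gal F. cond1 n \<tau> y z g g' \<sigma>))
     \<and> (cond1 n \<tau> y z g g' id \<longleftrightarrow>
          (\<forall>i\<in>{1..n-1}. z i = y i) \<and> (\<exists>a\<in>F. a \<noteq> 0 \<and> g' = (\<lambda>u. a * g u)))
     \<and> (cond1 n \<tau> y z g g' \<tau> \<longleftrightarrow>
          (\<forall>i\<in>{1..n-1}. z i = (\<tau> ^^ i) (inverse (y 1)) * y 1 * \<tau> (y i)) \<and>
          (\<exists>a\<in>F. a \<noteq> 0 \<and> g' = (\<lambda>u. a * \<tau> (g (inv \<tau> (inverse (y 1) * u)))))))
  \<and> (\<forall>(x::nat \<Rightarrow> 'a) w.
       A0_norm_nonzero n \<tau> (x(0 := 0)) \<longrightarrow> A0_norm_nonzero n \<tau> (w(0 := 0)) \<longrightarrow>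
       (twisted_iso F id (cyc_map n \<tau> (x(0 := 0))) id (cyc_map n \<tau> (w(0 := 0)))
          \<longleftrightarrow> (\<exists>v \<sigma>. v \<noteq> 0 \<and> \<sigma> \<in> Gal F \<and>
                 (\<forall>i\<in>{1..n-1}. w i = \<sigma> (x i) * (\<tau> ^^ i) v))))
  \<and> (\<forall>(x::nat \<Rightarrow> 'a) w.
       A0_norm_nonzero n \<tau> (x(0 := 1)) \<longrightarrow> A0_norm_nonzero n \<tau> (w(0 := 1)) \<longrightarrow>
       (twisted_iso F id (cyc_map n \<tau> (x(0 := 1))) id (cyc_map n \<tau> (w(0 := 1)))
          \<longleftrightarrow> (\<exists>\<sigma>\<in>Gal F. \<forall>i\<in>{1..n-1}. w i = \<sigma> (x i))))"
  proof -
  interpret cg F n \<tau> using cyc n2 by unfold_locales auto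
  have ynz: "m \<noteq> 0" if "m \<in> M" for m using M that unfolding norm_reps_def by auto
  have lin: "F_linear F g" if "g \<in> GL F" for g using that unfolding GL_def by auto
  show ?thesis
  proof (intro conjI allI impI)
    fix y z :: "nat \<Rightarrow> 'a" and g g'
    assume g: "g \<in> GL F" and g': "g' \<in> GL F" and y1: "y 1 \<in> M" and z1: "z 1 \<in> M"
      and "\<forall>i\<in>{2..n-1}. y i \<noteq> 0 \<and> z i \<noteq> 0" and ay: "A0_norm_nonzero n \<tau> (y(0 := 1))"
      and "A0_norm_nonzero n \<tau> (z(0 := 1))"
    show "twisted_iso F (cyc_map n \<tau> (y(0 := 1))) g (cyc_map n \<tau> (z(0 := 1))) g'
          \<longleftrightarrow> z 1 = y 1 \<and> (\<exists>\<sigma>\<in>Gal F. cond1 n \<tau> y z g g' \<sigma>)"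
      by (rule part1[where y=y and z=z and g=g and g'=g' and M=M, OF n2 M g g' y1 z1 ay])
    show "cond1 n \<tau> y z g g' id \<longleftrightarrow>
          (\<forall>i\<in>{1..n-1}. z i = y i) \<and> (\<exists>a\<in>F. a \<noteq> 0 \<and> g' = (\<lambda>u. a * g u))"
      by (rule part1b[where y=y and z=z and g=g and g'=g', OF ynz[OF y1] lin[OF g]])
    show "cond1 n \<tau> y z g g' \<tau> \<longleftrightarrow>
          (\<forall>i\<in>{1..n-1}. z i = (\<tau> ^^ i) (inverse (y 1)) * y 1 * \<tau> (y i)) \<and>
          (\<exists>a\<in>F. a \<noteq> 0 \<and> g' = (\<lambda>u. a * \<tau> (g (inv \<tau> (inverse (y 1) * u)))))"
      by (rule part1c[where y=y and z=z and g=g and g'=g', OF ynz[OF y1] lin[OF g]])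
  next
    fix x w :: "nat \<Rightarrow> 'a"
    assume "A0_norm_nonzero n \<tau> (x(0 := 0))"
    then show "twisted_iso F id (cyc_map n \<tau> (x(0 := 0))) id (cyc_map n \<tau> (w(0 := 0)))
          \<longleftrightarrow> (\<exists>v \<sigma>. v \<noteq> 0 \<and> \<sigma> \<in> Gal F \<and>
                 (\<forall>i\<in>{1..n-1}. w i = \<sigma> (x i) * (\<tau> ^^ i) v))" by (rule part2)
  next
    fix x w :: "nat \<Rightarrow> 'a"
    assume "A0_norm_nonzero n \<tau> (x(0 := 1))"
    then show "twisted_iso F id (cyc_map n \<tau> (x(0 := 1))) id (cyc_map n \<tau> (w(0 := 1)))
          \<longleftrightarrow> (\<exists>\<sigma>\<in>Gal F. \<forall>i\<in>{1..n-1}. w i = \<sigma> (x i))" by (rule part3)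
  qed
qed

end
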